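(* Let $(E\to M,\rho,\langle\cdot,\cdot\rangle,\circ)$ be a Courant algebroid and $(\mathbf I,\mathbf J,\mathbf K)$ an almost hypercomplex structure on $E$ with $N_{\mathbf I,\mathbf J}=0$. Then the hypercomplex connection $$\nabla_XY=-\tfrac12\mathbf K\big(\mathbf JY\circ\mathbf IX-\mathbf J(Y\circ\mathbf IX)-\mathbf I(\mathbf JY\circ X)+\mathbf J\mathbf I(Y\circ X)\big)$$ satisfies $\nabla\mathbf I=\nabla\mathbf J=\nabla\mathbf K=0$ and, for all $X,Y\in\Gamma(E)$, $$T(X,Y)=\mathbf ID\langle X,\mathbf IY\rangle+\mathbf JD\langle X,\mathbf JY\rangle+\mathbf KD\langle X,\mathbf KY\rangle.$$
   Context: A Courant algebroid $(E\to M,\rho,\langle\cdot,\cdot\rangle,\circ)$ consists of a real vector bundle $E\to M$ over a smooth manifold, a nondegenerate symmetric fiberwise bilinear pairing $\langle\cdot,\cdot\rangle$ on $E$, a vector bundle map $\rho:E\to TM$ (the anchor), and an $\mathbb R$-bilinear operation $\circ$ on $\Gamma(E)$ (the Dorfman bracket) such that for all $f\in C^\infty(M)$, $x,y,z\in\Gamma(E)$: $x\circ(y\circ z)=(x\circ y)\circ z+y\circ(x\circ z)$; $\rho(x\circ y)=[\rho(x),\rho(y)]$; $x\circ(fy)=(\rho(x)f)y+f(x\circ y)$; $x\circ y+y\circ x=2D\langle x,y\rangle$; $(Df)\circ x=0$; $\rho(x)\langle y,z\rangle=\langle x\circ y,z\rangle+\langle y,x\circ z\rangle$. Here $D:C^\infty(M)\to\Gamma(E)$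 is the $\mathbb R$-linear map defined by $\langle Df,x\rangle=\tfrac12\rho(x)f$. The Courant bracket is $[\![x,y]\!]=\tfrac12(x\circ y-y\circ x)$. For vector bundle endomorphisms $F,G$ of $E$ (over $\mathrm{id}_M$), the Nijenhuis concomitant is the tensor $N_{F,G}:E\otimes E\to E$ given by $N_{F,G}(X,Y)=FX\circ GY-F(X\circ GY)-G(FX\circ Y)+FG(X\circ Y)+GX\circ FY-G(X\circ FY)-F(GX\circ Y)+GF(X\circ Y)$. An almost hypercomplex structure on $E$ is a triple $(\mathbf I,\mathbf J,\mathbf K)$ of vector bundle endomorphisms of $E$ over $\mathrm{id}_M$, each orthogonal for $\langle\cdot,\cdot\rangle$, with $\mathbf I^2=\mathbf J^2=\mathbf K^2=\mathbf I\mathbf J\mathbf K=-1$. Given an almost hypercomplex structure, for $f\in C^\infty(M)$ and $X,Y\in\Gamma(E)$ set $\Delta_f(X,Y)=\langle X,Y\rangle Df+\langle\mathbf IX,Y\rangle\mathbf I Df+\langle\mathbf JX,Y\rangle\mathbf JDf+\langle\mathbf KX,Y\rangle\mathbf KDf$. A hypercomplex connection is an $\mathbb R$-bilinear map $\Gamma(E)\times\Gamma(E)\to\Gamma(E)$, $(X,Y)\mapsto\nabla_XY$, with $\nabla_{fX}Y=f\nabla_XY$ and $\nabla_X(fY)=(\rho(X)f)Y+f\nabla_XY-\Delta_f(X,Y)$. Its torsion is $T(X,Y)=\nabla_XY-\nabla_YX-[\![X,Y]\!]$. For an endomorphism $P$ of $E$, $(\nabla_XP)Y:=\nabla_X(PY)-P(\nabla_XY)$,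 and $\nabla P=0$ means this vanishes for all $X,Y$. *)

theory Defs
  imports Main "HOL.Real_Vector_Spaces"
begin

text \<open>The type 'f plays the role of the commutative real algebra C^infinity(M);
  the type 's plays the role of the space of sections Gamma(E), a module over 'f
  (via sm) whose real-vector-space structure is the restriction of scalars.
  Vector bundle endomorphisms over id_M correspond to 'f-linear maps of sections;
  rho x is the vector field rho(x), acting as a derivation on 'f.\<close>

definition is_fmodule :: "('f::{comm_ring_1,real_algebra_1} \<Rightarrow> 's::real_vector \<Rightarrow> 's) \<Rightarrow> bool" where
  "is_fmodule sm \<longleftrightarrow>
     (\<forall>a b x. sm (a + b) x = sm a x + sm b x) \<and>
     (\<forall>a x y. sm a (x + y) = sm a x + sm a y) \<and>
     (\<forall>a b x. sm (a * b) x = sm a (sm b x)) \<and>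
     (\<forall>x. sm 1 x = x) \<and>
     (\<forall>r x. sm (of_real r) x = r *\<^sub>R x)"

definition is_derivation :: "('f::{comm_ring_1,real_algebra_1} \<Rightarrow> 'f) \<Rightarrow> bool" where
  "is_derivation v \<longleftrightarrow>
     (\<forall>f g. v (f + g) = v f + v g) \<and>
     (\<forall>r f. v (r *\<^sub>R f) = r *\<^sub>R v f) \<and>
     (\<forall>f g. v (f * g) = f * v g + g * v f)"

definition courant_algebroid ::
  "('f::{comm_ring_1,real_algebra_1} \<Rightarrow> 's::real_vector \<Rightarrow> 's) \<Rightarrow> ('s \<Rightarrow> 'f \<Rightarrow> 'f) \<Rightarrow>
   ('s \<Rightarrow> 's \<Rightarrow> 'f) \<Rightarrow> ('s \<Rightarrow> 's \<Rightarrow> 's) \<Rightarrow> ('f \<Rightarrow> 's) \<Rightarrow> bool" where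
  "courant_algebroid sm rho pair dorf D \<longleftrightarrow>
     is_fmodule sm \<and>
     \<comment> \<open>anchor: a vector bundle map E -> TM\<close>
     (\<forall>x. is_derivation (rho x)) \<and>
     (\<forall>x y g. rho (x + y) g = rho x g + rho y g) \<and>
     (\<forall>f x g. rho (sm f x) g = f * rho x g) \<and>
     \<comment> \<open>pairing: symmetric, fiberwise bilinear, nondegenerate\<close>
     (\<forall>x y. pair x y = pair y x) \<and>
     (\<forall>x x' y. pair (x + x') y = pair x y + pair x' y) \<and>
     (\<forall>f x y. pair (sm f x) y = f * pair x y) \<and>
     (\<forall>x. (\<forall>y. pair x y = 0) \<longrightarrow> x = 0) \<and>
     \<comment> \<open>Dorfman bracket is R-bilinear\<close>
     (\<forall>x x' y. dorf (x + x') y = dorf x y + dorf x' y) \<and>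
     (\<forall>x y y'. dorf x (y + y') = dorf x y + dorf x y') \<and>
     (\<forall>r x y. dorf (r *\<^sub>R x) y = r *\<^sub>R dorf x y) \<and>
     (\<forall>r x y. dorf x (r *\<^sub>R y) = r *\<^sub>R dorf x y) \<and>
     \<comment> \<open>D is defined by <Df, x> = 1/2 rho(x) f\<close>
     (\<forall>f x. pair (D f) x = (1/2) *\<^sub>R rho x f) \<and>
     \<comment> \<open>the axioms\<close>
     (\<forall>x y z. dorf x (dorf y z) = dorf (dorf x y) z + dorf y (dorf x z)) \<and>
     (\<forall>x y g. rho (dorf x y) g = rho x (rho y g) - rho y (rho x g)) \<and>
     (\<forall>x f y. dorf x (sm f y) = sm (rho x f) y + sm f (dorf x y)) \<and>
     (\<forall>x y. dorf x y + dorf y x = 2 *\<^sub>R D (pair x y)) \<and>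
     (\<forall>f x. dorf (D f) x = 0) \<and>
     (\<forall>x y z. rho x (pair y z) = pair (dorf x y) z + pair y (dorf x z))"

definition courant_bracket :: "('s::real_vector \<Rightarrow> 's \<Rightarrow> 's) \<Rightarrow> 's \<Rightarrow> 's \<Rightarrow> 's" where
  "courant_bracket dorf x y = (1/2) *\<^sub>R (dorf x y - dorf y x)"

text \<open>Vector bundle endomorphism of E over id_M, i.e. C-infinity-linear map of sections.\<close>
definition is_endo :: "('f::{comm_ring_1,real_algebra_1} \<Rightarrow> 's::real_vector \<Rightarrow> 's) \<Rightarrow> ('s \<Rightarrow> 's) \<Rightarrow> bool" where
  "is_endo sm F \<longleftrightarrow> (\<forall>x y. F (x + y) = F x + F y) \<and> (\<forall>f x. F (sm f x) = sm f (F x))"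

definition is_orthogonal :: "('s \<Rightarrow> 's \<Rightarrow> 'f) \<Rightarrow> ('s \<Rightarrow> 's) \<Rightarrow> bool" where
  "is_orthogonal pair F \<longleftrightarrow> (\<forall>x y. pair (F x) (F y) = pair x y)"

definition almost_hypercomplex ::
  "('f::{comm_ring_1,real_algebra_1} \<Rightarrow> 's::real_vector \<Rightarrow> 's) \<Rightarrow> ('s \<Rightarrow> 's \<Rightarrow> 'f) \<Rightarrow>
   ('s \<Rightarrow> 's) \<Rightarrow> ('s \<Rightarrow> 's) \<Rightarrow> ('s \<Rightarrow> 's) \<Rightarrow> bool" where
  "almost_hypercomplex sm pair I J K \<longleftrightarrow>
     is_endo sm I \<and> is_endo sm J \<and> is_endo sm K \<and>
     is_orthogonal pair I \<and> is_orthogonal pair J \<and> is_orthogonal pair K \<and>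
     (\<forall>x. I (I x) = - x) \<and> (\<forall>x. J (J x) = - x) \<and> (\<forall>x. K (K x) = - x) \<and>
     (\<forall>x. I (J (K x)) = - x)"

definition nijenhuis :: "('s::real_vector \<Rightarrow> 's \<Rightarrow> 's) \<Rightarrow> ('s \<Rightarrow> 's) \<Rightarrow> ('s \<Rightarrow> 's) \<Rightarrow> 's \<Rightarrow> 's \<Rightarrow> 's" where
  "nijenhuis dorf F G X Y =
     dorf (F X) (G Y) - F (dorf X (G Y)) - G (dorf (F X) Y) + F (G (dorf X Y))
   + dorf (G X) (F Y) - G (dorf X (F Y)) - F (dorf (G X) Y) + G (F (dorf X Y))"

definition Delta ::
  "('f::{comm_ring_1,real_algebra_1} \<Rightarrow> 's::real_vector \<Rightarrow> 's) \<Rightarrow> ('s \<Rightarrow> 's \<Rightarrow> 'f) \<Rightarrow> ('f \<Rightarrow> 's) \<Rightarrow>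
   ('s \<Rightarrow> 's) \<Rightarrow> ('s \<Rightarrow> 's) \<Rightarrow> ('s \<Rightarrow> 's) \<Rightarrow> 'f \<Rightarrow> 's \<Rightarrow> 's \<Rightarrow> 's" where
  "Delta sm pair D I J K f X Y =
     sm (pair X Y) (D f) + sm (pair (I X) Y) (I (D f))
   + sm (pair (J X) Y) (J (D f)) + sm (pair (K X) Y) (K (D f))"

definition hypercomplex_connection ::
  "('f::{comm_ring_1,real_algebra_1} \<Rightarrow> 's::real_vector \<Rightarrow> 's) \<Rightarrow> ('s \<Rightarrow> 'f \<Rightarrow> 'f) \<Rightarrow>
   ('s \<Rightarrow> 's \<Rightarrow> 'f) \<Rightarrow> ('f \<Rightarrow> 's) \<Rightarrow>
   ('s \<Rightarrow> 's) \<Rightarrow> ('s \<Rightarrow> 's) \<Rightarrow> ('s \<Rightarrow> 's) \<Rightarrow> ('s \<Rightarrow> 's \<Rightarrow> 's) \<Rightarrow> bool" where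
  "hypercomplex_connection sm rho pair D I J K nabla \<longleftrightarrow>
     (\<forall>X X' Y. nabla (X + X') Y = nabla X Y + nabla X' Y) \<and>
     (\<forall>X Y Y'. nabla X (Y + Y') = nabla X Y + nabla X Y') \<and>
     (\<forall>r X Y. nabla (r *\<^sub>R X) Y = r *\<^sub>R nabla X Y) \<and>
     (\<forall>r X Y. nabla X (r *\<^sub>R Y) = r *\<^sub>R nabla X Y) \<and>
     (\<forall>f X Y. nabla (sm f X) Y = sm f (nabla X Y)) \<and>
     (\<forall>f X Y. nabla X (sm f Y) = sm (rho X f) Y + sm f (nabla X Y) - Delta sm pair D I J K f X Y)"

definition torsion :: "('s::real_vector \<Rightarrow> 's \<Rightarrow> 's) \<Rightarrow> ('s \<Rightarrow> 's \<Rightarrow> 's) \<Rightarrow> 's \<Rightarrow> 's \<Rightarrow> 's" where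
  "torsion dorf nabla X Y = nabla X Y - nabla Y X - courant_bracket dorf X Y"

definition cov_deriv :: "('s::real_vector \<Rightarrow> 's \<Rightarrow> 's) \<Rightarrow> ('s \<Rightarrow> 's) \<Rightarrow> 's \<Rightarrow> 's \<Rightarrow> 's" where
  "cov_deriv nabla P X Y = nabla X (P Y) - P (nabla X Y)"

definition hc_nabla :: "('s::real_vector \<Rightarrow> 's \<Rightarrow> 's) \<Rightarrow> ('s \<Rightarrow> 's) \<Rightarrow> ('s \<Rightarrow> 's) \<Rightarrow> ('s \<Rightarrow> 's) \<Rightarrow> 's \<Rightarrow> 's \<Rightarrow> 's" where
  "hc_nabla dorf I J K X Y =
     - (1/2) *\<^sub>R K (dorf (J Y) (I X) - J (dorf Y (I X)) - I (dorf (J Y) X) + J (I (dorf Y X)))"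

end

theory Submission
  imports Defs
begin

locale hcx =
  fixes pair :: "'s::real_vector \<Rightarrow> 's \<Rightarrow> 'f::{comm_ring_1,real_algebra_1}"
    and dorf :: "'s \<Rightarrow> 's \<Rightarrow> 's"
    and D :: "'f \<Rightarrow> 's"
    and I J K :: "'s \<Rightarrow> 's"
  assumes I_add: "\<And>x y. I (x + y) = I x + I y"
    and J_add: "\<And>x y. J (x + y) = J x + J y"
    and K_add: "\<And>x y. K (x + y) = K x + K y"
    and I_scale: "\<And>r x. I (r *\<^sub>R x) = r *\<^sub>R I x"
    and J_scale: "\<And>r x. J (r *\<^sub>R x) = r *\<^sub>R J x"
    and K_scale: "\<And>r x. K (r *\<^sub>R x) = r *\<^sub>R K x"
    and II: "\<And>x. I (I x) = - x" and JJ: "\<And>x. J (J x) = - x" and KK: "\<And>x. K (K x) = - x"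
    and IJ: "\<And>x. I (J x) = K x" and JI: "\<And>x. J (I x) = - K x"
    and JK: "\<And>x. J (K x) = I x" and KJ: "\<And>x. K (J x) = - I x"
    and KI: "\<And>x. K (I x) = J x" and IK: "\<And>x. I (K x) = - J x"
    and dorf_addL: "\<And>x x' y. dorf (x + x') y = dorf x y + dorf x' y"
    and dorf_addR: "\<And>x y y'. dorf x (y + y') = dorf x y + dorf x y'"
    and dorf_scaleL: "\<And>r x y. dorf (r *\<^sub>R x) y = r *\<^sub>R dorf x y"
    and dorf_scaleR: "\<And>r x y. dorf x (r *\<^sub>R y) = r *\<^sub>R dorf x y"
    and dorf_sym: "\<And>x y. dorf x y + dorf y x = 2 *\<^sub>R D (pair x y)"
    and pair_comm: "\<And>x y. pair x y = pair y x"
    and pair_addL: "\<And>x x' y. pair (x + x') y = pair x y + pair x' y"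
    and pair_I: "\<And>x y. pair (I x) y = - pair x (I y)"
    and pair_J: "\<And>x y. pair (J x) y = - pair x (J y)"
    and pair_K: "\<And>x y. pair (K x) y = - pair x (K y)"
    and D_add: "\<And>f g. D (f + g) = D f + D g"
    and NIJ: "\<And>X Y. nijenhuis dorf I J X Y = 0"
begin

lemma addhom_minus:
  fixes h :: "'a::ab_group_add \<Rightarrow> 'b::ab_group_add"
  assumes "\<And>x y. h (x + y) = h x + h y"
  shows "h (- x) = - h x" "h (x - y) = h x - h y" "h 0 = 0"
proof -
  have z: "h 0 = 0" using assms[of 0 0] by simp
  have m: "h (- u) = - h u" for u
  proof -
    have "h (- u) + h u = 0" using assms[of "-u" u] z by simp
    then show ?thesis by (simp add: eq_neg_iff_add_eq_0)
  qed
  show "h (- x) = - h x" by (rule m)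
  show "h (x - y) = h x - h y" using assms[of x "-y"] m[of y] by simp
  show "h 0 = 0" by (rule z)
qed

lemmas I_m = addhom_minus[of I, OF I_add]
lemmas J_m = addhom_minus[of J, OF J_add]
lemmas K_m = addhom_minus[of K, OF K_add]
lemmas D_m = addhom_minus[of D, OF D_add]
lemma dorfL_m: "dorf (- x) y = - dorf x y" "dorf (x - x') y = dorf x y - dorf x' y" "dorf 0 y = 0"
  using addhom_minus[of "\<lambda>x. dorf x y", OF dorf_addL] by auto
lemma dorfR_m: "dorf y (- x) = - dorf y x" "dorf y (x - x') = dorf y x - dorf y x'" "dorf y 0 = 0"
  using addhom_minus[of "\<lambda>x. dorf y x", OF dorf_addR] by auto
lemma pairL_m: "pair (- x) y = - pair x y"
  using addhom_minus[of "\<lambda>x. pair x y", OF pair_addL] by auto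
lemma pairR_m: "pair y (- x) = - pair y x"
  using pairL_m pair_comm by metis

lemma half: "(1/2::real) *\<^sub>R a + (1/2::real) *\<^sub>R a = a"
  "(1/2::real) *\<^sub>R a + ((1/2::real) *\<^sub>R a + b) = a + b" for a b :: 's
  by (simp_all add: scaleR_add_left[symmetric])

lemmas LIN = I_add J_add K_add I_scale J_scale K_scale I_m J_m K_m D_add D_m
  dorf_addL dorf_addR dorf_scaleL dorf_scaleR dorfL_m dorfR_m
  II JJ KK IJ JI JK KJ KI IK
lemmas PN = LIN pair_I pair_J pair_K pairL_m pairR_m
lemmas EQS = LIN half cov_deriv_def hc_nabla_def nijenhuis_def torsion_def courant_bracket_def

lemma covI: "cov_deriv (hc_nabla dorf I J K) I X Y = 0"
proof -
  have r0: "dorf (X) (I (Y)) + dorf (I (Y)) (X) - (2::real) *\<^sub>R D (pair X (I (Y))) = 0" using dorf_sym[of "X" "I (Y)"] by (simp add: PN)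
  have r1: "dorf (Y) (I (X)) + dorf (I (X)) (Y) - (-2::real) *\<^sub>R D (pair X (I (Y))) = 0" using dorf_sym[of "Y" "I (X)"] pair_comm[of "Y" "I (X)"] by (simp add: PN)
  have r2: "nijenhuis dorf I J (X) (J (Y)) = 0" using NIJ[of "X" "J (Y)"] by (simp add: LIN)
  have r3: "nijenhuis dorf I J (Y) (J (X)) = 0" using NIJ[of "Y" "J (X)"] by (simp add: LIN)
  have r4: "nijenhuis dorf I J (I (X)) (K (Y)) = 0" using NIJ[of "I (X)" "K (Y)"] by (simp add: LIN)
  have r5: "nijenhuis dorf I J (I (Y)) (K (X)) = 0" using NIJ[of "I (Y)" "K (X)"] by (simp add: LIN)
  have r6: "nijenhuis dorf I J (J (Y)) (X) = 0" using NIJ[of "J (Y)" "X"] by (simp add: LIN)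
  have "dorf (X) (Y) + dorf (Y) (X) - (2::real) *\<^sub>R D (pair X (Y)) = 0" using dorf_sym[of "X" "Y"] by (simp add: PN)
  then have r7: "I (dorf (X) (Y) + dorf (Y) (X) - (2::real) *\<^sub>R D (pair X (Y))) = 0" by (simp only: I_m(3) J_m(3) K_m(3))
  have r8: "I (nijenhuis dorf I J (X) (K (Y))) = 0" using NIJ[of "X" "K (Y)"] by (simp add: LIN)
  have "dorf (I (X)) (I (Y)) + dorf (I (Y)) (I (X)) - (2::real) *\<^sub>R D (pair X (Y)) = 0" using dorf_sym[of "I (X)" "I (Y)"] by (simp add: PN)
  then have r9: "I (dorf (I (X)) (I (Y)) + dorf (I (Y)) (I (X)) - (2::real) *\<^sub>R D (pair X (Y))) = 0" by (simp only: I_m(3) J_m(3) K_m(3))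
  have r10: "I (nijenhuis dorf I J (I (X)) (J (Y))) = 0" using NIJ[of "I (X)" "J (Y)"] by (simp add: LIN)
  have r11: "I (nijenhuis dorf I J (J (Y)) (I (X))) = 0" using NIJ[of "J (Y)" "I (X)"] by (simp add: LIN)
  have "cov_deriv (hc_nabla dorf I J K) I X Y = (-1::real) *\<^sub>R (dorf (X) (I (Y)) + dorf (I (Y)) (X) - (2::real) *\<^sub>R D (pair X (I (Y)))) + (-1::real) *\<^sub>R (dorf (Y) (I (X)) + dorf (I (X)) (Y) - (-2::real) *\<^sub>R D (pair X (I (Y)))) + (-1/2::real) *\<^sub>R (nijenhuis dorf I J (X) (J (Y))) + (-1/2::real) *\<^sub>R (nijenhuis dorf I J (Y) (J (X))) + (-1/2::real) *\<^sub>R (nijenhuis dorf I J (I (X)) (K (Y))) + (-1/2::real) *\<^sub>R (nijenhuis dorf I J (I (Y)) (K (X))) + (1/2::real) *\<^sub>R (nijenhuis dorf I J (J (Y)) (X)) + (1::real) *\<^sub>R (I (dorf (X) (Y) + dorf (Y) (X) - (2::real) *\<^sub>R D (pair X (Y)))) + (1/2::real) *\<^sub>R (I (nijenhuis dorf I J (X) (K (Y)))) + (-1::real) *\<^sub>R (I (dorf (I (X)) (I (Y)) + dorf (I (Y)) (I (X)) - (2::real) *\<^sub>R D (pair X (Y)))) + (-1/2::real) *\<^sub>R (I (nijenhuis dorf I J (I (X)) (J (Y)))) + (-1/2::real) *\<^sub>R (I (nijenhuis dorf I J (J (Y)) (I (X))))"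
    by (simp add: EQS algebra_simps)
  also have "\<dots> = 0"
    by (simp only: r0 r1 r2 r3 r4 r5 r6 r7 r8 r9 r10 r11 scaleR_zero_right add_0_left add_0_right)
  finally show ?thesis .
qed

lemma covJ: "cov_deriv (hc_nabla dorf I J K) J X Y = 0"
  by (simp add: EQS algebra_simps)

lemma covK: "cov_deriv (hc_nabla dorf I J K) K X Y = 0"
proof -
  have r0: "nijenhuis dorf I J (Y) (X) = 0" using NIJ[of "Y" "X"] by (simp add: LIN)
  have r1: "I (nijenhuis dorf I J (I (Y)) (X)) = 0" using NIJ[of "I (Y)" "X"] by (simp add: LIN)
  have "cov_deriv (hc_nabla dorf I J K) K X Y = (-1/2::real) *\<^sub>R (nijenhuis dorf I J (Y) (X)) + (1/2::real) *\<^sub>R (I (nijenhuis dorf I J (I (Y)) (X)))"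
    by (simp add: EQS algebra_simps)
  also have "\<dots> = 0"
    by (simp only: r0 r1 scaleR_zero_right add_0_left add_0_right)
  finally show ?thesis .
qed

lemma tors: "torsion dorf (hc_nabla dorf I J K) X Y - (I (D (pair X (I Y))) + J (D (pair X (J Y))) + K (D (pair X (K Y)))) = 0"
proof -
  have r0: "dorf (X) (Y) + dorf (Y) (X) - (2::real) *\<^sub>R D (pair X (Y)) = 0" using dorf_sym[of "X" "Y"] by (simp add: PN)
  have r1: "nijenhuis dorf I J (X) (K (Y)) = 0" using NIJ[of "X" "K (Y)"] by (simp add: LIN)
  have r2: "dorf (J (X)) (J (Y)) + dorf (J (Y)) (J (X)) - (2::real) *\<^sub>R D (pair X (Y)) = 0" using dorf_sym[of "J (X)" "J (Y)"] by (simp add: PN)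
  have r3: "I (nijenhuis dorf I J (J (Y)) (X)) = 0" using NIJ[of "J (Y)" "X"] by (simp add: LIN)
  have "dorf (J (X)) (K (Y)) + dorf (K (Y)) (J (X)) - (-2::real) *\<^sub>R D (pair X (I (Y))) = 0" using dorf_sym[of "J (X)" "K (Y)"] by (simp add: PN)
  then have r4: "I (dorf (J (X)) (K (Y)) + dorf (K (Y)) (J (X)) - (-2::real) *\<^sub>R D (pair X (I (Y)))) = 0" by (simp only: I_m(3) J_m(3) K_m(3))
  have r5: "J (nijenhuis dorf I J (X) (I (Y))) = 0" using NIJ[of "X" "I (Y)"] by (simp add: LIN)
  have "dorf (X) (J (Y)) + dorf (J (Y)) (X) - (2::real) *\<^sub>R D (pair X (J (Y))) = 0" using dorf_sym[of "X" "J (Y)"] by (simp add: PN)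
  then have r6: "J (dorf (X) (J (Y)) + dorf (J (Y)) (X) - (2::real) *\<^sub>R D (pair X (J (Y)))) = 0" by (simp only: I_m(3) J_m(3) K_m(3))
  have "dorf (X) (K (Y)) + dorf (K (Y)) (X) - (2::real) *\<^sub>R D (pair X (K (Y))) = 0" using dorf_sym[of "X" "K (Y)"] by (simp add: PN)
  then have r7: "K (dorf (X) (K (Y)) + dorf (K (Y)) (X) - (2::real) *\<^sub>R D (pair X (K (Y)))) = 0" by (simp only: I_m(3) J_m(3) K_m(3))
  have "torsion dorf (hc_nabla dorf I J K) X Y - (I (D (pair X (I Y))) + J (D (pair X (J Y))) + K (D (pair X (K Y)))) = (1/2::real) *\<^sub>R (dorf (X) (Y) + dorf (Y) (X) - (2::real) *\<^sub>R D (pair X (Y))) + (-1/2::real) *\<^sub>R (nijenhuis dorf I J (X) (K (Y))) + (-1/2::real) *\<^sub>R (dorf (J (X)) (J (Y)) + dorf (J (Y)) (J (X)) - (2::real) *\<^sub>R D (pair X (Y))) + (1/2::real) *\<^sub>R (I (nijenhuis dorf I J (J (Y)) (X))) + (-1/2::real) *\<^sub>R (I (dorf (J (X)) (K (Y)) + dorf (K (Y)) (J (X)) - (-2::real) *\<^sub>R D (pair X (I (Y))))) + (1/2::real) *\<^sub>R (J (nijenhuis dorf I J (X) (I (Y)))) + (1/2::real) *\<^sub>R (J (dorf (X) (J (Y)) + dorf (J (Y)) (X) - (2::real) *\<^sub>R D (pair X (J (Y))))) + (1/2::real) *\<^sub>R (K (dorf (X) (K (Y)) + dorf (K (Y)) (X)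 - (2::real) *\<^sub>R D (pair X (K (Y)))))"
    by (simp add: EQS algebra_simps)
  also have "\<dots> = 0"
    by (simp only: r0 r1 r2 r3 r4 r5 r6 r7 scaleR_zero_right add_0_left add_0_right)
  finally show ?thesis .
qed
end

locale hcy = hcx pair dorf D I J K
  for pair :: "'s::real_vector \<Rightarrow> 's \<Rightarrow> 'f::{comm_ring_1,real_algebra_1}"
    and dorf D I J K +
  fixes sm :: "'f \<Rightarrow> 's \<Rightarrow> 's" and rho :: "'s \<Rightarrow> 'f \<Rightarrow> 'f"
  assumes sm_addL: "\<And>a b x. sm (a + b) x = sm a x + sm b x"
    and sm_addR: "\<And>a x y. sm a (x + y) = sm a x + sm a y"
    and sm_mult: "\<And>a b x. sm (a * b) x = sm a (sm b x)"
    and sm_real: "\<And>r x. sm (of_real r) x = r *\<^sub>R x"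
    and I_sm: "\<And>f x. I (sm f x) = sm f (I x)"
    and J_sm: "\<And>f x. J (sm f x) = sm f (J x)"
    and K_sm: "\<And>f x. K (sm f x) = sm f (K x)"
    and dorf_smR: "\<And>x f y. dorf x (sm f y) = sm (rho x f) y + sm f (dorf x y)"
    and pair_smL: "\<And>f x y. pair (sm f x) y = f * pair x y"
    and D_mult: "\<And>f g. D (f * g) = sm f (D g) + sm g (D f)"
begin

lemma smL_m: "sm (- a) x = - sm a x" "sm (a - b) x = sm a x - sm b x"
  using addhom_minus[of "\<lambda>a. sm a x", OF sm_addL] by auto
lemma smR_m: "sm a (- x) = - sm a x" "sm a (x - y) = sm a x - sm a y" "sm a 0 = 0"
  using addhom_minus[of "\<lambda>x. sm a x", OF sm_addR] by auto
lemma sm_scale: "sm a (r *\<^sub>R x) = r *\<^sub>R sm a x"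
proof -
  have "sm a (r *\<^sub>R x) = sm a (sm (of_real r) x)" by (simp add: sm_real)
  also have "\<dots> = sm (of_real r) (sm a x)" by (simp only: sm_mult[symmetric] mult.commute)
  finally show ?thesis by (simp add: sm_real)
qed
lemma pair_smR: "pair y (sm f x) = f * pair y x"
  using pair_smL pair_comm by metis

lemma dorf_smL: "dorf (sm f x) y = sm f (dorf x y) - sm (rho y f) x + 2 *\<^sub>R sm (pair x y) (D f)"
proof -
  have "dorf (sm f x) y = 2 *\<^sub>R D (pair (sm f x) y) - dorf y (sm f x)"
    using dorf_sym[of "sm f x" y] by (simp add: algebra_simps)
  also have "\<dots> = 2 *\<^sub>R (sm f (D (pair x y)) + sm (pair x y) (D f)) - sm (rho y f) x - sm f (dorf y x)"
    by (simp add: pair_smL D_mult dorf_smR algebra_simps)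
  also have "sm f (dorf y x) = sm f (2 *\<^sub>R D (pair x y) - dorf x y)"
  proof -
    have "dorf y x = 2 *\<^sub>R D (pair x y) - dorf x y" using dorf_sym[of x y]
      by (metis add_diff_cancel_left')
    then show ?thesis by simp
  qed
  finally show ?thesis by (simp add: smR_m sm_scale sm_addR algebra_simps)
qed

lemmas SM = sm_addL sm_addR smL_m smR_m sm_scale I_sm J_sm K_sm dorf_smR dorf_smL pair_smL pair_smR D_mult
  sm_mult[symmetric]

lemma conn: "hypercomplex_connection sm rho pair D I J K (hc_nabla dorf I J K)"
  unfolding hypercomplex_connection_def
proof (intro conjI allI)
  fix X X' Y show "hc_nabla dorf I J K (X + X') Y = hc_nabla dorf I J K X Y + hc_nabla dorf I J K X' Y"
    by (simp add: EQS algebra_simps)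
next
  fix X Y Y' show "hc_nabla dorf I J K X (Y + Y') = hc_nabla dorf I J K X Y + hc_nabla dorf I J K X Y'"
    by (simp add: EQS algebra_simps)
next
  fix r X Y show "hc_nabla dorf I J K (r *\<^sub>R X) Y = r *\<^sub>R hc_nabla dorf I J K X Y"
    by (simp add: EQS algebra_simps)
next
  fix r X Y show "hc_nabla dorf I J K X (r *\<^sub>R Y) = r *\<^sub>R hc_nabla dorf I J K X Y"
    by (simp add: EQS algebra_simps)
next
  fix f X Y show "hc_nabla dorf I J K (sm f X) Y = sm f (hc_nabla dorf I J K X Y)"
    by (simp add: EQS SM PN algebra_simps)
next
  fix f X Y show "hc_nabla dorf I J K X (sm f Y) = sm (rho X f) Y + sm f (hc_nabla dorf I J K X Y) - Delta sm pair D I J K f X Y"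
    using pair_comm[of Y "I X"] pair_comm[of Y "J X"] pair_comm[of Y "K X"] pair_comm[of Y X]
    by (simp add: EQS SM PN Delta_def algebra_simps)
qed

end

theorem mainTheorem5:
  fixes sm :: "'f::{comm_ring_1,real_algebra_1} \<Rightarrow> 's::real_vector \<Rightarrow> 's"
    and rho :: "'s \<Rightarrow> 'f \<Rightarrow> 'f"
    and pair :: "'s \<Rightarrow> 's \<Rightarrow> 'f"
    and dorf :: "'s \<Rightarrow> 's \<Rightarrow> 's"
    and D :: "'f \<Rightarrow> 's"
    and I J K :: "'s \<Rightarrow> 's"
  assumes CA: "courant_algebroid sm rho pair dorf D"
    and HC: "almost_hypercomplex sm pair I J K"
    and NIJ: "\<forall>X Y. nijenhuis dorf I J X Y = 0"
  shows "hypercomplex_connection sm rho pair D I J K (hc_nabla dorf I J K)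
    \<and> (\<forall>X Y. cov_deriv (hc_nabla dorf I J K) I X Y = 0)
    \<and> (\<forall>X Y. cov_deriv (hc_nabla dorf I J K) J X Y = 0)
    \<and> (\<forall>X Y. cov_deriv (hc_nabla dorf I J K) K X Y = 0)
    \<and> (\<forall>X Y. torsion dorf (hc_nabla dorf I J K) X Y =
          I (D (pair X (I Y))) + J (D (pair X (J Y))) + K (D (pair X (K Y))))"
proof -
  note C = CA[unfolded courant_algebroid_def is_fmodule_def is_derivation_def]
  note H = HC[unfolded almost_hypercomplex_def is_endo_def is_orthogonal_def]
  have sm_addL[rule_format]: "\<forall>a b x. sm (a + b) x = sm a x + sm b x" using C by (elim conjE) assumption
  have sm_addR[rule_format]: "\<forall>a x y. sm a (x + y) = sm a x + sm a y" using C by (elim conjE) assumption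
  have sm_mult[rule_format]: "\<forall>a b x. sm (a * b) x = sm a (sm b x)" using C by (elim conjE) assumption
  have sm_real[rule_format]: "\<forall>r x. sm (of_real r) x = r *\<^sub>R x" using C by (elim conjE) assumption
  have I_add[rule_format]: "\<forall>x y. I (x + y) = I x + I y" using H by (elim conjE) assumption
  have J_add[rule_format]: "\<forall>x y. J (x + y) = J x + J y" using H by (elim conjE) assumption
  have K_add[rule_format]: "\<forall>x y. K (x + y) = K x + K y" using H by (elim conjE) assumption
  have I_sm[rule_format]: "\<forall>f x. I (sm f x) = sm f (I x)" using H by (elim conjE) assumption
  have J_sm[rule_format]: "\<forall>f x. J (sm f x) = sm f (J x)" using H by (elim conjE) assumption
  have K_sm[rule_format]: "\<forall>f x. K (sm f x) = sm f (K x)" using H by (elim conjE) assumption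
  have I_scale: "\<And>r x. I (r *\<^sub>R x) = r *\<^sub>R I x" by (metis sm_real I_sm)
  have J_scale: "\<And>r x. J (r *\<^sub>R x) = r *\<^sub>R J x" by (metis sm_real J_sm)
  have K_scale: "\<And>r x. K (r *\<^sub>R x) = r *\<^sub>R K x" by (metis sm_real K_sm)
  have Im: "\<And>x. I (- x) = - I x" using I_scale[of "-1"] by simp
  have Jm: "\<And>x. J (- x) = - J x" using J_scale[of "-1"] by simp
  have Km: "\<And>x. K (- x) = - K x" using K_scale[of "-1"] by simp
  have II[rule_format]: "\<forall>x. I (I x) = - x" using H by (elim conjE) assumption
  have JJ[rule_format]: "\<forall>x. J (J x) = - x" using H by (elim conjE) assumption
  have KK[rule_format]: "\<forall>x. K (K x) = - x" using H by (elim conjE) assumption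
  have IJK[rule_format]: "\<forall>x. I (J (K x)) = - x" using H by (elim conjE) assumption
  have JK: "\<And>x. J (K x) = I x"
  proof -
    fix x have "I (I (J (K x))) = I (- x)" by (simp add: IJK)
    then show "J (K x) = I x" by (simp add: II Im)
  qed
  have JI: "\<And>x. J (I x) = - K x" by (metis JK JJ Km)
  have IK: "\<And>x. I (K x) = - J x" by (metis JK KK Jm)
  have IJ: "\<And>x. I (J x) = K x"
  proof -
    fix x have "x = K (- K x)" by (simp add: Km KK)
    then have "I (J x) = I (J (K (- K x)))" by simp
    then show "I (J x) = K x" by (simp add: IJK)
  qed
  have KJ: "\<And>x. K (J x) = - I x" by (metis IJ JJ Im)
  have KI: "\<And>x. K (I x) = J x" by (metis IJ JI Im IK minus_minus)
  have dorf_addL[rule_format]: "\<forall>x x' y. dorf (x + x') y = dorf x y + dorf x' y" using C by (elim conjE) assumption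
  have dorf_addR[rule_format]: "\<forall>x y y'. dorf x (y + y') = dorf x y + dorf x y'" using C by (elim conjE) assumption
  have dorf_scaleL[rule_format]: "\<forall>r x y. dorf (r *\<^sub>R x) y = r *\<^sub>R dorf x y" using C by (elim conjE) assumption
  have dorf_scaleR[rule_format]: "\<forall>r x y. dorf x (r *\<^sub>R y) = r *\<^sub>R dorf x y" using C by (elim conjE) assumption
  have dorf_sym[rule_format]: "\<forall>x y. dorf x y + dorf y x = 2 *\<^sub>R D (pair x y)" using C by (elim conjE) assumption
  have pair_comm[rule_format]: "\<forall>x y. pair x y = pair y x" using C by (elim conjE) assumption
  have pair_addL[rule_format]: "\<forall>x x' y. pair (x + x') y = pair x y + pair x' y" using C by (elim conjE) assumption
  have pair_smL[rule_format]: "\<forall>f x y. pair (sm f x) y = f * pair x y" using C by (elim conjE) assumption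
  have pair_mR: "\<And>x y. pair x (- y) = - pair x y"
  proof -
    fix x y have "pair (sm (of_real (-1)) y) x = of_real (-1) * pair y x" by (rule pair_smL)
    then show "pair x (- y) = - pair x y" using sm_real[of "-1" y] pair_comm by simp
  qed
  have orthI[rule_format]: "\<forall>x y. pair (I x) (I y) = pair x y" using H by (elim conjE) assumption
  have orthJ[rule_format]: "\<forall>x y. pair (J x) (J y) = pair x y" using H by (elim conjE) assumption
  have orthK[rule_format]: "\<forall>x y. pair (K x) (K y) = pair x y" using H by (elim conjE) assumption
  have pair_I: "\<And>x y. pair (I x) y = - pair x (I y)" by (metis orthI II pair_mR minus_minus)
  have pair_J: "\<And>x y. pair (J x) y = - pair x (J y)" by (metis orthJ JJ pair_mR minus_minus)
  have pair_K: "\<And>x y. pair (K x) y = - pair x (K y)" by (metis orthK KK pair_mR minus_minus)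
  have nondeg[rule_format]: "\<forall>x. (\<forall>y. pair x y = 0) \<longrightarrow> x = 0" using C by (elim conjE) assumption
  have pairD[rule_format]: "\<forall>f x. pair (D f) x = (1/2) *\<^sub>R rho x f" using C by (elim conjE) assumption
  have rho_add[rule_format]: "\<forall>x f g. rho x (f + g) = rho x f + rho x g" using C by (elim conjE) (meson allI)
  have rho_mult[rule_format]: "\<forall>x f g. rho x (f * g) = f * rho x g + g * rho x f" using C by (elim conjE) (meson allI)
  have pair_mL: "\<And>x x' y. pair (x - x') y = pair x y - pair x' y"
    by (metis add_uminus_conv_diff pair_addL pair_comm pair_mR)
  have D_add: "\<And>f g. D (f + g) = D f + D g"
  proof -
    fix f g
    have "\<forall>y. pair (D (f + g) - (D f + D g)) y = 0"
      by (simp add: pair_mL pair_addL pairD rho_add scaleR_add_right)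
    then show "D (f + g) = D f + D g" using nondeg[of "D (f + g) - (D f + D g)"] by simp
  qed
  have D_mult: "\<And>f g. D (f * g) = sm f (D g) + sm g (D f)"
  proof -
    fix f g
    have "\<forall>y. pair (D (f * g) - (sm f (D g) + sm g (D f))) y = 0"
    proof
      fix y
      have "pair (D (f * g) - (sm f (D g) + sm g (D f))) y = pair (D (f * g)) y - (f * pair (D g) y + g * pair (D f) y)"
        by (simp only: pair_mL pair_addL pair_smL)
      also have "\<dots> = (1/2) *\<^sub>R (f * rho y g + g * rho y f) - (f * ((1/2) *\<^sub>R rho y g) + g * ((1/2) *\<^sub>R rho y f))"
        by (simp only: pairD rho_mult)
      also have "\<dots> = 0" by (simp only: scaleR_add_right mult_scaleR_right diff_self)
      finally show "pair (D (f * g) - (sm f (D g) + sm g (D f))) y = 0" .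
    qed
    then show "D (f * g) = sm f (D g) + sm g (D f)" using nondeg[of "D (f * g) - (sm f (D g) + sm g (D f))"] by simp
  qed
  have dorf_smR[rule_format]: "\<forall>x f y. dorf x (sm f y) = sm (rho x f) y + sm f (dorf x y)" using C by (elim conjE) assumption
  have NIJ': "\<And>X Y. nijenhuis dorf I J X Y = 0" using NIJ by blast
  interpret hcy pair dorf D I J K sm rho
    by unfold_locales (fact I_add J_add K_add I_scale J_scale K_scale II JJ KK IJ JI JK KJ KI IK
      dorf_addL dorf_addR dorf_scaleL dorf_scaleR dorf_sym pair_comm pair_addL pair_I pair_J pair_K
      D_add NIJ' sm_addL sm_addR sm_mult sm_real I_sm J_sm K_sm dorf_smR pair_smL D_mult)+
  show ?thesis
  proof (intro conjI allI)
    show "hypercomplex_connection sm rho pair D I J K (hc_nabla dorf I J K)" by (rule conn)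
  next
    fix X Y show "cov_deriv (hc_nabla dorf I J K) I X Y = 0" by (rule covI)
  next
    fix X Y show "cov_deriv (hc_nabla dorf I J K) J X Y = 0" by (rule covJ)
  next
    fix X Y show "cov_deriv (hc_nabla dorf I J K) K X Y = 0" by (rule covK)
  next
    fix X Y show "torsion dorf (hc_nabla dorf I J K) X Y =
          I (D (pair X (I Y))) + J (D (pair X (J Y))) + K (D (pair X (K Y)))"
      using tors[of X Y] by (simp only: right_minus_eq)
  qed
qed

end
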